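(* Every sawed tree $F$ of height $n$ validates $\mathbf{PL}_n$.
   Context: A finite tree is a finite rooted poset in which each $\downarrow x$ is a chain; $\mathrm{Top}(T)$ is its set of maximal elements. Let $T$ be a finite tree of height $>0$ all of whose top elements have the same height, with a plane ordering $\prec$ of $\mathrm{Top}(T)$ (a linear order such that each $\uparrow x\cap\mathrm{Top}(T)$ is a $\prec$-interval); enumerate $\mathrm{Top}(T)=\{t_1\prec\cdots\prec t_k\}$. The sawed tree based on $(T,\prec)$ is $T$ together with new elements $s_1,\dots,s_{k-1}$ with $t_i<s_i$ and $t_{i+1}<s_i$ (closed under transitivity). The height of a poset is the maximum of $|C|-1$ over chains $C$. For a finite rooted poset $Q$, $\chi(Q)$ is its Jankov–Fine formula: a frame validates $\chi(Q)$ iff it has no surjective p-morphism (map with $f(\uparrow x)=\uparrow f(x)$) from an upset of it onto $Q$. $\mathbf{BD}_n$ is the logic of all finite frames of height at most $n$. The 3-fork is $\{r,a,b,c\}$ with $r<a,r<b,r<c$ only; the Scott frame is $\{r,u_1,u_2,v\}$ with $r<u_1<u_2$, $r<v$ (and $r<u_2$) only. $\mathbf{PL}_n$ is the smallest intermediate logic containing $\mathbf{BD}_n$, $\chi(\text{3-fork})$ and $\chi(\text{Scott frame})$. *)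

theory Defs
  imports Main
begin

datatype 'v fm = Var 'v | Bot | Conj "'v fm" "'v fm" | Disj "'v fm" "'v fm" | Imp "'v fm" "'v fm"

definition Top :: "'v fm" where "Top = Imp Bot Bot"
definition Neg :: "'v fm \<Rightarrow> 'v fm" where "Neg \<phi> = Imp \<phi> Bot"
definition Iff :: "'v fm \<Rightarrow> 'v fm \<Rightarrow> 'v fm" where "Iff \<phi> \<psi> = Conj (Imp \<phi> \<psi>) (Imp \<psi> \<phi>)"

definition Conjs :: "'v fm list \<Rightarrow> 'v fm" where "Conjs xs = foldr Conj xs Top"

text \<open>Conjunction of a finite set of formulas (order of conjuncts irrelevant up to equivalence).\<close>
definition ConjSet :: "'v fm set \<Rightarrow> 'v fm" where "ConjSet S = Conjs (SOME xs. set xs = S)"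

primrec subst :: "('v \<Rightarrow> 'w fm) \<Rightarrow> 'v fm \<Rightarrow> 'w fm" where
  "subst \<sigma> (Var p) = \<sigma> p"
| "subst \<sigma> Bot = Bot"
| "subst \<sigma> (Conj \<phi> \<psi>) = Conj (subst \<sigma> \<phi>) (subst \<sigma> \<psi>)"
| "subst \<sigma> (Disj \<phi> \<psi>) = Disj (subst \<sigma> \<phi>) (subst \<sigma> \<psi>)"
| "subst \<sigma> (Imp \<phi> \<psi>) = Imp (subst \<sigma> \<phi>) (subst \<sigma> \<psi>)"

definition porder :: "'w set \<Rightarrow> ('w \<Rightarrow> 'w \<Rightarrow> bool) \<Rightarrow> bool" where
  "porder W R \<longleftrightarrow> (\<forall>x\<in>W. R x x) \<and> (\<forall>x\<in>W. \<forall>y\<in>W. R x y \<and> R y x \<longrightarrow> x = y)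
     \<and> (\<forall>x\<in>W. \<forall>y\<in>W. \<forall>z\<in>W. R x y \<and> R y z \<longrightarrow> R x z)"

definition is_upset :: "'w set \<Rightarrow> ('w \<Rightarrow> 'w \<Rightarrow> bool) \<Rightarrow> 'w set \<Rightarrow> bool" where
  "is_upset W R U \<longleftrightarrow> U \<subseteq> W \<and> (\<forall>x\<in>U. \<forall>y\<in>W. R x y \<longrightarrow> y \<in> U)"

fun forces :: "'w set \<Rightarrow> ('w \<Rightarrow> 'w \<Rightarrow> bool) \<Rightarrow> ('v \<Rightarrow> 'w set) \<Rightarrow> 'w \<Rightarrow> 'v fm \<Rightarrow> bool" where
  "forces W R V w (Var p) = (w \<in> V p)"
| "forces W R V w Bot = False"
| "forces W R V w (Conj \<phi> \<psi>) = (forces W R V w \<phi> \<and> forces W R V w \<psi>)"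
| "forces W R V w (Disj \<phi> \<psi>) = (forces W R V w \<phi> \<or> forces W R V w \<psi>)"
| "forces W R V w (Imp \<phi> \<psi>) =
     (\<forall>v\<in>W. R w v \<longrightarrow> forces W R V v \<phi> \<longrightarrow> forces W R V v \<psi>)"

definition valid :: "'w set \<Rightarrow> ('w \<Rightarrow> 'w \<Rightarrow> bool) \<Rightarrow> 'v fm \<Rightarrow> bool" where
  "valid W R \<phi> \<longleftrightarrow> (\<forall>V. (\<forall>p. is_upset W R (V p)) \<longrightarrow> (\<forall>w\<in>W. forces W R V w \<phi>))"

definition chain_in :: "'w set \<Rightarrow> ('w \<Rightarrow> 'w \<Rightarrow> bool) \<Rightarrow> 'w set \<Rightarrow> bool" where
  "chain_in W R C \<longleftrightarrow> C \<subseteq> W \<and> (\<forall>x\<in>C. \<forall>y\<in>C. R x y \<or> R y x)"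

definition height_le :: "'w set \<Rightarrow> ('w \<Rightarrow> 'w \<Rightarrow> bool) \<Rightarrow> nat \<Rightarrow> bool" where
  "height_le W R n \<longleftrightarrow> (\<forall>C. chain_in W R C \<longrightarrow> finite C \<and> card C \<le> Suc n)"

definition has_height :: "'w set \<Rightarrow> ('w \<Rightarrow> 'w \<Rightarrow> bool) \<Rightarrow> nat \<Rightarrow> bool" where
  "has_height W R n \<longleftrightarrow> height_le W R n \<and> (\<exists>C. chain_in W R C \<and> finite C \<and> card C = Suc n)"

definition up_imp :: "'w set \<Rightarrow> ('w \<Rightarrow> 'w \<Rightarrow> bool) \<Rightarrow> 'w set \<Rightarrow> 'w set \<Rightarrow> 'w set" where
  "up_imp W R a b = {x\<in>W. \<forall>y\<in>W. R x y \<and> y \<in> a \<longrightarrow> y \<in> b}"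

text \<open>Jankov formula of the finite rooted poset Q = (W,R) with root r, built from the
  finite subdirectly irreducible Heyting algebra A = Up(Q) of its upsets, with one
  variable p_a (here: Var a) for each a in A, and second-largest element s = W - {r}.\<close>
definition jankov :: "'w set \<Rightarrow> ('w \<Rightarrow> 'w \<Rightarrow> bool) \<Rightarrow> 'w \<Rightarrow> 'w set fm" where
  "jankov W R r =
    (let A = {U. is_upset W R U};
         \<Gamma> = {Iff (Var (a \<inter> b)) (Conj (Var a) (Var b)) | a b. a \<in> A \<and> b \<in> A}
           \<union> {Iff (Var (a \<union> b)) (Disj (Var a) (Var b)) | a b. a \<in> A \<and> b \<in> A}
           \<union> {Iff (Var (up_imp W R a b)) (Imp (Var a) (Var b)) | a b. a \<in> A \<and> b \<in> A}
           \<union> {Iff (Var (up_imp W R a {})) (Neg (Var a)) | a. a \<in> A}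
     in Imp (ConjSet \<Gamma>) (Var (W - {r})))"

definition fork3_W :: "nat set" where "fork3_W = {0,1,2,3}"
definition fork3_le :: "nat \<Rightarrow> nat \<Rightarrow> bool" where "fork3_le x y \<longleftrightarrow> x = y \<or> x = 0"

text \<open>Scott frame: r=0, u1=1, u2=2, v=3 with r<u1<u2, r<v.\<close>
definition scott_W :: "nat set" where "scott_W = {0,1,2,3}"
definition scott_le :: "nat \<Rightarrow> nat \<Rightarrow> bool" where
  "scott_le x y \<longleftrightarrow> x = y \<or> x = 0 \<or> (x = 1 \<and> y = 2)"

definition chi_fork :: "nat set fm" where "chi_fork = jankov fork3_W fork3_le 0"
definition chi_scott :: "nat set fm" where "chi_scott = jankov scott_W scott_le 0"

text \<open>Logic of all finite frames of height at most n (finite frames represented on nat,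
  which covers all finite frames up to isomorphism).\<close>
definition BD :: "nat \<Rightarrow> nat fm set" where
  "BD n = {\<phi>. \<forall>(W::nat set) R. finite W \<and> porder W R \<and> height_le W R n \<longrightarrow> valid W R \<phi>}"

text \<open>Smallest set containing BD_n (which already contains IPC) and chi(3-fork), chi(Scott),
  closed under modus ponens and uniform substitution.\<close>
inductive_set PL :: "nat \<Rightarrow> nat fm set" for n :: nat where
  bd: "\<phi> \<in> BD n \<Longrightarrow> \<phi> \<in> PL n"
| fork: "subst \<sigma> chi_fork \<in> PL n"
| scott: "subst \<sigma> chi_scott \<in> PL n"
| mp: "\<phi> \<in> PL n \<Longrightarrow> Imp \<phi> \<psi> \<in> PL n \<Longrightarrow> \<psi> \<in> PL n"
| sub: "\<phi> \<in> PL n \<Longrightarrow> subst \<tau> \<phi> \<in> PL n"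

definition down :: "'a set \<Rightarrow> ('a \<Rightarrow> 'a \<Rightarrow> bool) \<Rightarrow> 'a \<Rightarrow> 'a set" where
  "down W R x = {y\<in>W. R y x}"

definition is_tree :: "'a set \<Rightarrow> ('a \<Rightarrow> 'a \<Rightarrow> bool) \<Rightarrow> bool" where
  "is_tree W R \<longleftrightarrow> finite W \<and> porder W R \<and> (\<exists>r\<in>W. \<forall>x\<in>W. R r x)
     \<and> (\<forall>x\<in>W. chain_in W R (down W R x))"

definition Top_el :: "'a set \<Rightarrow> ('a \<Rightarrow> 'a \<Rightarrow> bool) \<Rightarrow> 'a set" where
  "Top_el W R = {x\<in>W. \<forall>y\<in>W. R x y \<longrightarrow> y = x}"

definition plane_order :: "'a set \<Rightarrow> ('a \<Rightarrow> 'a \<Rightarrow> bool) \<Rightarrow> ('a \<Rightarrow> 'a \<Rightarrow> bool) \<Rightarrow> bool" where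
  "plane_order W R prec \<longleftrightarrow>
     (\<forall>x\<in>Top_el W R. \<not> prec x x)
   \<and> (\<forall>x\<in>Top_el W R. \<forall>y\<in>Top_el W R. \<forall>z\<in>Top_el W R. prec x y \<and> prec y z \<longrightarrow> prec x z)
   \<and> (\<forall>x\<in>Top_el W R. \<forall>y\<in>Top_el W R. x \<noteq> y \<longrightarrow> prec x y \<or> prec y x)
   \<and> (\<forall>x\<in>W. \<forall>a\<in>Top_el W R. \<forall>b\<in>Top_el W R. \<forall>c\<in>Top_el W R.
        prec a b \<and> prec b c \<and> R x a \<and> R x c \<longrightarrow> R x b)"

text \<open>Sawed tree: elements Inl x (x in T) and Inr i (the new point s_i, 1 \<le> i \<le> k-1),
  with t_i, t_(i+1) < s_i; this is the reflexive-transitive closure.\<close>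
definition saw_W :: "'a set \<Rightarrow> nat \<Rightarrow> ('a + nat) set" where
  "saw_W W k = Inl ` W \<union> Inr ` {1..<k}"

fun saw_le :: "('a \<Rightarrow> 'a \<Rightarrow> bool) \<Rightarrow> (nat \<Rightarrow> 'a) \<Rightarrow> ('a + nat) \<Rightarrow> ('a + nat) \<Rightarrow> bool" where
  "saw_le R t (Inl x) (Inl y) = R x y"
| "saw_le R t (Inl x) (Inr i) = (R x (t i) \<or> R x (t (Suc i)))"
| "saw_le R t (Inr i) (Inr j) = (i = j)"
| "saw_le R t (Inr i) (Inl y) = False"

end

theory Submission
  imports Defs
begin

lemma persist:
  assumes po: "porder W R" and up: "\<forall>p. is_upset W R (V p)"
  shows "w \<in> W \<Longrightarrow> v \<in> W \<Longrightarrow> R w v \<Longrightarrow> forces W R V w \<phi> \<Longrightarrow> forces W R V v \<phi>"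
proof (induction \<phi> arbitrary: w v)
  case (Var p) then show ?case using up unfolding is_upset_def by auto
next
  case Bot then show ?case by simp
next
  case (Conj a b) then show ?case by auto
next
  case (Disj a b) then show ?case by auto
next
  case (Imp a b)
  have tr: "\<And>x y z. x \<in> W \<Longrightarrow> y \<in> W \<Longrightarrow> z \<in> W \<Longrightarrow> R x y \<Longrightarrow> R y z \<Longrightarrow> R x z"
    using po unfolding porder_def by blast
  show ?case unfolding forces.simps
  proof (intro ballI impI)
    fix u assume u: "u \<in> W" "R v u" "forces W R V u a"
    have "R w u" using tr[of w v u] Imp.prems u by blast
    then show "forces W R V u b" using Imp.prems(4) u by simp
  qed
qed

lemma forces_Conjs: "forces W R V w (Conjs xs) \<longleftrightarrow> (\<forall>\<psi>\<in>set xs. forces W R V w \<psi>)"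
  by (induction xs) (auto simp: Conjs_def Top_def)

lemma forces_ConjSet:
  assumes "finite S"
  shows "forces W R V w (ConjSet S) \<longleftrightarrow> (\<forall>\<psi>\<in>S. forces W R V w \<psi>)"
proof -
  have "\<exists>xs. set xs = S" using assms finite_list by blast
  then have "set (SOME xs. set xs = S) = S" by (rule someI_ex)
  then show ?thesis unfolding ConjSet_def forces_Conjs by simp
qed

lemma forces_Iff:
  "porder W R \<Longrightarrow> y \<in> W \<Longrightarrow> forces W R V y (Iff a b) \<Longrightarrow> forces W R V y a = forces W R V y b"
proof -
  assume po: "porder W R" and y: "y \<in> W" and f: "forces W R V y (Iff a b)"
  have r: "R y y" using po y unfolding porder_def by blast
  have 1: "\<forall>v\<in>W. R y v \<longrightarrow> forces W R V v a \<longrightarrow> forces W R V v b"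
   and 2: "\<forall>v\<in>W. R y v \<longrightarrow> forces W R V v b \<longrightarrow> forces W R V v a"
    using f by (simp_all add: Iff_def)
  show ?thesis using 1 2 r y by blast
qed

lemma ex_minimal:
  assumes "finite X" "X \<noteq> {}"
    and tr: "\<forall>x\<in>X. \<forall>y\<in>X. \<forall>z\<in>X. P x y \<longrightarrow> P y z \<longrightarrow> P x z"
    and an: "\<forall>x\<in>X. \<forall>y\<in>X. P x y \<longrightarrow> P y x \<longrightarrow> x = y"
  shows "\<exists>m\<in>X. \<forall>x\<in>X. P x m \<longrightarrow> x = m"
  using assms
proof (induction X rule: finite_ne_induct)
  case (singleton x) then show ?case by auto
next
  case (insert a F)
  have trF: "\<forall>x\<in>F. \<forall>y\<in>F. \<forall>z\<in>F. P x y \<longrightarrow> P y z \<longrightarrow> P x z" using insert.prems(1) by blast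
  have anF: "\<forall>x\<in>F. \<forall>y\<in>F. P x y \<longrightarrow> P y x \<longrightarrow> x = y" using insert.prems(2) by blast
  obtain m where m: "m \<in> F" "\<forall>x\<in>F. P x m \<longrightarrow> x = m" using insert.IH[OF trF anF] by blast
  show ?case
  proof (cases "P a m \<and> a \<noteq> m")
    case True
    have "\<forall>x\<in>insert a F. P x a \<longrightarrow> x = a"
    proof (intro ballI impI)
      fix x assume x: "x \<in> insert a F" "P x a"
      show "x = a"
      proof (rule ccontr)
        assume "x \<noteq> a"
        then have xF: "x \<in> F" using x by simp
        have "P x m" using insert.prems(1) x True xF m(1) by blast
        then have "x = m" using m xF by blast
        then show False using True x insert.prems(2) m(1) by blast
      qed
    qed
    then show ?thesis by blast
  next
    case False
    have "\<forall>x\<in>insert a F. P x m \<longrightarrow> x = m" using False m by blast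
    then show ?thesis using m(1) by blast
  qed
qed

lemma subst_forces:
  assumes "w \<in> W"
  shows "forces W R V w (subst \<sigma> \<phi>) \<longleftrightarrow> forces W R (\<lambda>p. {v\<in>W. forces W R V v (\<sigma> p)}) w \<phi>"
  using assms by (induction \<phi> arbitrary: w) auto

lemma valid_subst:
  fixes \<phi> :: "'v fm" and \<sigma> :: "'v \<Rightarrow> 'u fm" and W :: "'a set"
  assumes po: "porder W R" and v: "valid W R \<phi>"
  shows "valid W R (subst \<sigma> \<phi>)"
  unfolding valid_def
proof (intro allI impI ballI)
  fix V :: "'u \<Rightarrow> 'a set" and w assume up: "\<forall>p. is_upset W R (V p)" and w: "w \<in> W"
  have "\<forall>p. is_upset W R {v\<in>W. forces W R V v (\<sigma> p)}"
    using persist[OF po up] unfolding is_upset_def by blast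
  moreover have "(\<forall>p. is_upset W R {v\<in>W. forces W R V v (\<sigma> p)}) \<longrightarrow> (\<forall>w\<in>W. forces W R (\<lambda>p. {v\<in>W. forces W R V v (\<sigma> p)}) w \<phi>)"
    using v unfolding valid_def by (rule spec)
  ultimately have "forces W R (\<lambda>p. {v\<in>W. forces W R V v (\<sigma> p)}) w \<phi>"
    using w by blast
  then show "forces W R V w (subst \<sigma> \<phi>)" using subst_forces[OF w] by blast
qed

lemma valid_mp:
  assumes po: "porder W R" and "valid W R \<phi>" "valid W R (Imp \<phi> \<psi>)"
  shows "valid W R \<psi>"
proof -
  have rf: "\<And>x. x \<in> W \<Longrightarrow> R x x" using po unfolding porder_def by blast
  show ?thesis using assms(2,3) rf unfolding valid_def by fastforce
qed

lemma jankov_pmorph: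
  fixes W :: "'w set" and R and V :: "'q set \<Rightarrow> 'w set" and Q :: "'q set"
  assumes po: "porder W R" and fQ: "finite Q" and poQ: "porder Q RQ" and rQ: "r \<in> Q"
    and root: "\<forall>x\<in>Q. RQ r x"
    and up: "\<forall>p. is_upset W R (V p)" and w: "w \<in> W"
    and nf: "\<not> forces W R V w (jankov Q RQ r)"
  shows "\<exists>w0\<in>W. \<exists>f. f w0 = r \<and> (\<forall>y\<in>W. R w0 y \<longrightarrow> f y \<in> Q)
     \<and> (\<forall>y\<in>W. \<forall>z\<in>W. R w0 y \<longrightarrow> R y z \<longrightarrow> RQ (f y) (f z))
     \<and> (\<forall>y\<in>W. R w0 y \<longrightarrow> (\<forall>q\<in>Q. RQ (f y) q \<longrightarrow> (\<exists>z\<in>W. R y z \<and> f z = q)))"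
proof -
  have reflW: "\<And>x. x \<in> W \<Longrightarrow> R x x" using po unfolding porder_def by blast
  have trW: "\<And>x y z. x \<in> W \<Longrightarrow> y \<in> W \<Longrightarrow> z \<in> W \<Longrightarrow> R x y \<Longrightarrow> R y z \<Longrightarrow> R x z"
    using po unfolding porder_def by blast
  have reflQ: "\<And>x. x \<in> Q \<Longrightarrow> RQ x x" using poQ unfolding porder_def by blast
  have antiQ: "\<And>x y. x \<in> Q \<Longrightarrow> y \<in> Q \<Longrightarrow> RQ x y \<Longrightarrow> RQ y x \<Longrightarrow> x = y"
    using poQ unfolding porder_def by blast
  have trQ: "\<And>x y z. x \<in> Q \<Longrightarrow> y \<in> Q \<Longrightarrow> z \<in> Q \<Longrightarrow> RQ x y \<Longrightarrow> RQ y z \<Longrightarrow> RQ x z"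
    using poQ unfolding porder_def by blast
  have Vup: "\<And>p x y. x \<in> V p \<Longrightarrow> y \<in> W \<Longrightarrow> R x y \<Longrightarrow> y \<in> V p"
    using up unfolding is_upset_def by blast
  define A where "A = {U. is_upset Q RQ U}"
  define \<Gamma> where "\<Gamma> = {Iff (Var (a \<inter> b)) (Conj (Var a) (Var b)) | a b. a \<in> A \<and> b \<in> A}
           \<union> {Iff (Var (a \<union> b)) (Disj (Var a) (Var b)) | a b. a \<in> A \<and> b \<in> A}
           \<union> {Iff (Var (up_imp Q RQ a b)) (Imp (Var a) (Var b)) | a b. a \<in> A \<and> b \<in> A}
           \<union> {Iff (Var (up_imp Q RQ a {})) (Neg (Var a)) | a. a \<in> A}"
  have jk: "jankov Q RQ r = Imp (ConjSet \<Gamma>) (Var (Q - {r}))"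
    unfolding jankov_def A_def \<Gamma>_def Let_def by simp
  have "A \<subseteq> Pow Q" unfolding A_def is_upset_def by blast
  then have finA: "finite A" using fQ finite_subset by blast
  have finG: "finite \<Gamma>" unfolding \<Gamma>_def
    by (intro finite_UnI finite_image_set2 finite_image_set) (simp_all add: finA)
  obtain w0 where w0: "w0 \<in> W" "R w w0" and g0: "forces W R V w0 (ConjSet \<Gamma>)"
    and nq: "w0 \<notin> V (Q - {r})"
    using nf w unfolding jk by auto
  have G: "\<And>y \<psi>. y \<in> W \<Longrightarrow> R w0 y \<Longrightarrow> \<psi> \<in> \<Gamma> \<Longrightarrow> forces W R V y \<psi>"
  proof -
    fix y \<psi> assume y: "y \<in> W" "R w0 y" and p: "\<psi> \<in> \<Gamma>"
    have "forces W R V w0 \<psi>" using g0 p by (simp add: forces_ConjSet[OF finG])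
    then show "forces W R V y \<psi>" using persist[OF po up w0(1) y(1) y(2)] by blast
  qed
  have Gint: "\<And>y a b. y \<in> W \<Longrightarrow> R w0 y \<Longrightarrow> a \<in> A \<Longrightarrow> b \<in> A \<Longrightarrow>
      (y \<in> V (a \<inter> b)) = (y \<in> V a \<and> y \<in> V b)"
  proof -
    fix y a b assume h: "y \<in> W" "R w0 y" "a \<in> A" "b \<in> A"
    have "Iff (Var (a \<inter> b)) (Conj (Var a) (Var b)) \<in> \<Gamma>" unfolding \<Gamma>_def using h(3,4) by blast
    from forces_Iff[OF po h(1) G[OF h(1,2) this]]
    show "(y \<in> V (a \<inter> b)) = (y \<in> V a \<and> y \<in> V b)" by simp
  qed
  have Gun: "\<And>y a b. y \<in> W \<Longrightarrow> R w0 y \<Longrightarrow> a \<in> A \<Longrightarrow> b \<in> A \<Longrightarrow>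
      (y \<in> V (a \<union> b)) = (y \<in> V a \<or> y \<in> V b)"
  proof -
    fix y a b assume h: "y \<in> W" "R w0 y" "a \<in> A" "b \<in> A"
    have "Iff (Var (a \<union> b)) (Disj (Var a) (Var b)) \<in> \<Gamma>" unfolding \<Gamma>_def using h(3,4) by blast
    from forces_Iff[OF po h(1) G[OF h(1,2) this]]
    show "(y \<in> V (a \<union> b)) = (y \<in> V a \<or> y \<in> V b)" by simp
  qed
  have Gimp: "\<And>y a b. y \<in> W \<Longrightarrow> R w0 y \<Longrightarrow> a \<in> A \<Longrightarrow> b \<in> A \<Longrightarrow>
      (y \<in> V (up_imp Q RQ a b)) = (\<forall>v\<in>W. R y v \<longrightarrow> v \<in> V a \<longrightarrow> v \<in> V b)"
  proof -
    fix y a b assume h: "y \<in> W" "R w0 y" "a \<in> A" "b \<in> A"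
    have "Iff (Var (up_imp Q RQ a b)) (Imp (Var a) (Var b)) \<in> \<Gamma>" unfolding \<Gamma>_def using h(3,4) by blast
    from forces_Iff[OF po h(1) G[OF h(1,2) this]]
    show "(y \<in> V (up_imp Q RQ a b)) = (\<forall>v\<in>W. R y v \<longrightarrow> v \<in> V a \<longrightarrow> v \<in> V b)" by simp
  qed
  have Gneg: "\<And>y a. y \<in> W \<Longrightarrow> R w0 y \<Longrightarrow> a \<in> A \<Longrightarrow>
      (y \<in> V (up_imp Q RQ a {})) = (\<forall>v\<in>W. R y v \<longrightarrow> v \<notin> V a)"
  proof -
    fix y a assume h: "y \<in> W" "R w0 y" "a \<in> A"
    have "Iff (Var (up_imp Q RQ a {})) (Neg (Var a)) \<in> \<Gamma>" unfolding \<Gamma>_def using h(3) by blast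
    from forces_Iff[OF po h(1) G[OF h(1,2) this]]
    show "(y \<in> V (up_imp Q RQ a {})) = (\<forall>v\<in>W. R y v \<longrightarrow> v \<notin> V a)" by (simp add: Neg_def)
  qed
  have upintA: "\<And>a b. a \<in> A \<Longrightarrow> b \<in> A \<Longrightarrow> a \<inter> b \<in> A" unfolding A_def is_upset_def by blast
  have QA: "Q \<in> A" unfolding A_def is_upset_def by blast
  have eA: "{} \<in> A" unfolding A_def is_upset_def by blast
  have impA: "\<And>a b. up_imp Q RQ a b \<in> A"
  proof -
    fix a b
    have "is_upset Q RQ (up_imp Q RQ a b)" unfolding is_upset_def up_imp_def
    proof (intro conjI ballI impI)
      show "{x \<in> Q. \<forall>y\<in>Q. RQ x y \<and> y \<in> a \<longrightarrow> y \<in> b} \<subseteq> Q" by blast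
    next
      fix x y assume x: "x \<in> {x \<in> Q. \<forall>y\<in>Q. RQ x y \<and> y \<in> a \<longrightarrow> y \<in> b}" and y: "y \<in> Q" "RQ x y"
      then have xQ: "x \<in> Q" and xa: "\<forall>z\<in>Q. RQ x z \<and> z \<in> a \<longrightarrow> z \<in> b" by auto
      have "\<forall>z\<in>Q. RQ y z \<and> z \<in> a \<longrightarrow> z \<in> b" using xa trQ[OF xQ y(1)] y(2) by blast
      then show "y \<in> {x \<in> Q. \<forall>y\<in>Q. RQ x y \<and> y \<in> a \<longrightarrow> y \<in> b}" using y by blast
    qed
    then show "up_imp Q RQ a b \<in> A" unfolding A_def by simp
  qed
  have upA: "\<And>q. q \<in> Q \<Longrightarrow> {z\<in>Q. RQ q z} \<in> A"
    unfolding A_def is_upset_def using trQ by blast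
  have char: "\<And>y. y \<in> W \<Longrightarrow> R w0 y \<Longrightarrow> \<exists>q. q \<in> Q \<and> (\<forall>a\<in>A. (y \<in> V a) = (q \<in> a))"
  proof -
    fix y assume y: "y \<in> W" "R w0 y"
    have "up_imp Q RQ {} {} = Q" unfolding up_imp_def by blast
    then have yQ: "y \<in> V Q" using Gimp[OF y eA eA] by simp
    have "up_imp Q RQ Q {} = {}" unfolding up_imp_def using reflQ by blast
    then have ye: "y \<notin> V {}" using Gneg[OF y QA] yQ y(1) reflW by auto
    obtain m where m: "m \<in> A" "y \<in> V m" and mmin: "\<And>a. a \<in> A \<and> y \<in> V a \<Longrightarrow> card m \<le> card a"
      using ex_has_least_nat[of "\<lambda>a. a \<in> A \<and> y \<in> V a" Q card] QA yQ by blast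
    have mQ: "m \<subseteq> Q" using m(1) unfolding A_def is_upset_def by blast
    have mup: "\<forall>x\<in>m. \<forall>z\<in>Q. RQ x z \<longrightarrow> z \<in> m" using m(1) unfolding A_def is_upset_def by blast
    have mne: "m \<noteq> {}" using m ye by blast
    have finm: "finite m" using mQ fQ finite_subset by blast
    have trm: "\<forall>x\<in>m. \<forall>y\<in>m. \<forall>z\<in>m. RQ x y \<longrightarrow> RQ y z \<longrightarrow> RQ x z" using mQ trQ by blast
    have anm: "\<forall>x\<in>m. \<forall>y\<in>m. RQ x y \<longrightarrow> RQ y x \<longrightarrow> x = y" using mQ antiQ by blast
    obtain q where q: "q \<in> m" and qmin: "\<forall>x\<in>m. RQ x q \<longrightarrow> x = q"
      using ex_minimal[OF finm mne trm anm] by blast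
    have qQ: "q \<in> Q" using q mQ by blast
    define uq where "uq = {z\<in>Q. RQ q z}"
    define Uq where "Uq = {z\<in>m. \<not> RQ z q}"
    have uqA: "uq \<in> A" unfolding uq_def using upA[OF qQ] .
    have UqA: "Uq \<in> A" unfolding A_def is_upset_def
    proof (intro CollectI conjI ballI impI)
      show "Uq \<subseteq> Q" unfolding Uq_def using mQ by blast
    next
      fix x z assume x: "x \<in> Uq" and z: "z \<in> Q" "RQ x z"
      have xm: "x \<in> m" "\<not> RQ x q" using x unfolding Uq_def by auto
      have "z \<in> m" using mup xm z by blast
      moreover have "\<not> RQ z q" using trQ[of x z q] xm mQ z qQ by blast
      ultimately show "z \<in> Uq" unfolding Uq_def by blast
    qed
    have meq: "m = uq \<union> Uq"
    proof
      show "m \<subseteq> uq \<union> Uq"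
      proof
        fix z assume z: "z \<in> m"
        show "z \<in> uq \<union> Uq"
        proof (cases "RQ z q")
          case True
          then have "z = q" using qmin z by blast
          then show ?thesis unfolding uq_def using reflQ qQ by blast
        next
          case False then show ?thesis unfolding Uq_def using z by blast
        qed
      qed
    next
      show "uq \<union> Uq \<subseteq> m" unfolding uq_def Uq_def using mup q by blast
    qed
    have "y \<in> V uq \<or> y \<in> V Uq" using Gun[OF y uqA UqA] meq m(2) by simp
    moreover have "y \<notin> V Uq"
    proof
      assume "y \<in> V Uq"
      then have "card m \<le> card Uq" using mmin UqA by blast
      moreover have "Uq \<subset> m" unfolding Uq_def using q reflQ qQ by blast
      then have "card Uq < card m" using psubset_card_mono finm by blast
      ultimately show False by simp
    qed
    ultimately have yuq: "y \<in> V uq" by blast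
    have "\<forall>a\<in>A. (y \<in> V a) = (q \<in> a)"
    proof
      fix a assume a: "a \<in> A"
      show "(y \<in> V a) = (q \<in> a)"
      proof
        assume ya: "y \<in> V a"
        have "y \<in> V (a \<inter> m)" using Gint[OF y a m(1)] ya m(2) by simp
        then have "card m \<le> card (a \<inter> m)" using mmin upintA[OF a m(1)] by blast
        moreover have "card (a \<inter> m) \<le> card m" using finm by (simp add: card_mono)
        ultimately have "a \<inter> m = m" using card_subset_eq[OF finm, of "a \<inter> m"] by simp
        then show "q \<in> a" using q by blast
      next
        assume qa: "q \<in> a"
        have "uq \<subseteq> a" unfolding uq_def using a qa unfolding A_def is_upset_def by blast
        then have "a \<union> uq = a" by blast
        then show "y \<in> V a" using Gun[OF y a uqA] yuq by simp
      qed
    qed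
    then show "\<exists>q. q \<in> Q \<and> (\<forall>a\<in>A. (y \<in> V a) = (q \<in> a))" using qQ by blast
  qed
  define f where "f = (\<lambda>y. SOME q. q \<in> Q \<and> (\<forall>a\<in>A. (y \<in> V a) = (q \<in> a)))"
  have fp: "\<And>y. y \<in> W \<Longrightarrow> R w0 y \<Longrightarrow> f y \<in> Q \<and> (\<forall>a\<in>A. (y \<in> V a) = (f y \<in> a))"
    unfolding f_def using char by (rule someI_ex)
  have w0w0: "R w0 w0" using reflW w0(1) .
  have QrA: "Q - {r} \<in> A" unfolding A_def is_upset_def using root antiQ rQ by blast
  have f0: "f w0 = r"
  proof -
    have e: "(w0 \<in> V (Q - {r})) = (f w0 \<in> Q - {r})" using bspec[OF conjunct2[OF fp[OF w0(1) w0w0]] QrA] .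
    show ?thesis using e nq conjunct1[OF fp[OF w0(1) w0w0]] by blast
  qed
  have fmono: "\<forall>y\<in>W. \<forall>z\<in>W. R w0 y \<longrightarrow> R y z \<longrightarrow> RQ (f y) (f z)"
  proof (intro ballI impI)
    fix y z assume y: "y \<in> W" "z \<in> W" "R w0 y" "R y z"
    have wz: "R w0 z" using trW[OF w0(1) y(1,2)] y by blast
    have fy: "f y \<in> Q" using fp[OF y(1,3)] by blast
    have e1: "(y \<in> V {x\<in>Q. RQ (f y) x}) = (f y \<in> {x\<in>Q. RQ (f y) x})"
      using bspec[OF conjunct2[OF fp[OF y(1,3)]] upA[OF fy]] .
    have e2: "(z \<in> V {x\<in>Q. RQ (f y) x}) = (f z \<in> {x\<in>Q. RQ (f y) x})"
      using bspec[OF conjunct2[OF fp[OF y(2) wz]] upA[OF fy]] .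
    have "y \<in> V {x\<in>Q. RQ (f y) x}" using e1 reflQ[OF fy] fy by simp
    then have "z \<in> V {x\<in>Q. RQ (f y) x}" using Vup y by blast
    then show "RQ (f y) (f z)" using e2 by simp
  qed
  have fback: "\<forall>y\<in>W. R w0 y \<longrightarrow> (\<forall>q\<in>Q. RQ (f y) q \<longrightarrow> (\<exists>z\<in>W. R y z \<and> f z = q))"
  proof (intro ballI impI)
    fix y q assume y: "y \<in> W" "R w0 y" and q: "q \<in> Q" "RQ (f y) q"
    define a where "a = {x\<in>Q. RQ q x}"
    define b where "b = {x\<in>Q. RQ q x} - {q}"
    have aA: "a \<in> A" unfolding a_def using upA[OF q(1)] .
    have bA: "b \<in> A" unfolding A_def is_upset_def b_def
    proof (intro CollectI conjI ballI impI)
      show "{x \<in> Q. RQ q x} - {q} \<subseteq> Q" by blast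
    next
      fix x z assume x: "x \<in> {x \<in> Q. RQ q x} - {q}" and z: "z \<in> Q" "RQ x z"
      have "RQ q z" using trQ[of q x z] x z q(1) by blast
      moreover have "z \<noteq> q" using antiQ[of x q] x z q(1) by blast
      ultimately show "z \<in> {x \<in> Q. RQ q x} - {q}" using z by blast
    qed
    have "f y \<notin> up_imp Q RQ a b" unfolding up_imp_def a_def b_def using q reflQ by blast
    then have "y \<notin> V (up_imp Q RQ a b)" using bspec[OF conjunct2[OF fp[OF y]] impA] by simp
    then obtain v where v: "v \<in> W" "R y v" "v \<in> V a" "v \<notin> V b" using Gimp[OF y aA bA] by blast
    have wv: "R w0 v" using trW[OF w0(1) y(1) v(1)] y v by blast
    have "f v \<in> a" using bspec[OF conjunct2[OF fp[OF v(1) wv]] aA] v by simp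
    moreover have "f v \<notin> b" using bspec[OF conjunct2[OF fp[OF v(1) wv]] bA] v by simp
    ultimately
    have "f v = q" unfolding a_def b_def by blast
    then show "\<exists>z\<in>W. R y z \<and> f z = q" using v by blast
  qed
  have frange: "\<forall>y\<in>W. R w0 y \<longrightarrow> f y \<in> Q" using fp by blast
  show ?thesis using w0(1) f0 frange fmono fback by blast
qed

lemma po_refl: "porder W R \<Longrightarrow> x \<in> W \<Longrightarrow> R x x"
  unfolding porder_def by blast
lemma po_trans: "porder W R \<Longrightarrow> x \<in> W \<Longrightarrow> y \<in> W \<Longrightarrow> z \<in> W \<Longrightarrow> R x y \<Longrightarrow> R y z \<Longrightarrow> R x z"
  unfolding porder_def by blast
lemma po_anti: "porder W R \<Longrightarrow> x \<in> W \<Longrightarrow> y \<in> W \<Longrightarrow> R x y \<Longrightarrow> R y x \<Longrightarrow> x = y"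
  unfolding porder_def by blast

lemma ex_top:
  assumes fin: "finite W" and po: "porder W R" and y: "y \<in> W"
  shows "\<exists>m\<in>Top_el W R. R y m"
proof -
  define X where "X = {z\<in>W. R y z}"
  have finX: "finite X" using fin unfolding X_def by simp
  have "y \<in> X" using y po_refl[OF po y] unfolding X_def by blast
  then have neX: "X \<noteq> {}" by blast
  have trX: "\<forall>a\<in>X. \<forall>b\<in>X. \<forall>c\<in>X. R b a \<longrightarrow> R c b \<longrightarrow> R c a"
    unfolding X_def using po_trans[OF po] by blast
  have anX: "\<forall>a\<in>X. \<forall>b\<in>X. R b a \<longrightarrow> R a b \<longrightarrow> a = b"
    unfolding X_def using po_anti[OF po] by blast
  obtain m where m: "m \<in> X" "\<forall>a\<in>X. R m a \<longrightarrow> a = m"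
    using ex_minimal[OF finX neX, of "\<lambda>a b. R b a"] trX anX by blast
  have "m \<in> Top_el W R"
    unfolding Top_el_def
  proof (intro CollectI conjI ballI impI)
    show "m \<in> W" using m unfolding X_def by blast
  next
    fix z assume z: "z \<in> W" "R m z"
    have "R y z" using po_trans[OF po y _ z(1) _ z(2)] m unfolding X_def by blast
    then show "z = m" using m z unfolding X_def by blast
  qed
  then show ?thesis using m unfolding X_def by blast
qed

lemma saw_main:
  fixes W :: "'a set" and R t k prec and Q :: "nat set" and RQ cl and f :: "'a + nat \<Rightarrow> nat" and w0
  assumes fin: "finite W" and po: "porder W R"
    and plane: "plane_order W R prec"
    and enum: "bij_betw t {1..k} (Top_el W R)"
    and enum_mono: "\<forall>i j. 1 \<le> i \<and> i < j \<and> j \<le> k \<longrightarrow> prec (t i) (t j)"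
    and poS: "porder (saw_W W k) (saw_le R t)"
    and w0: "w0 \<in> saw_W W k" and f0: "f w0 = 0"
    and frange: "\<forall>y\<in>saw_W W k. saw_le R t w0 y \<longrightarrow> f y \<in> Q"
    and fmono: "\<forall>y\<in>saw_W W k. \<forall>z\<in>saw_W W k. saw_le R t w0 y \<longrightarrow> saw_le R t y z \<longrightarrow> RQ (f y) (f z)"
    and fback: "\<forall>y\<in>saw_W W k. saw_le R t w0 y \<longrightarrow> (\<forall>q\<in>Q. RQ (f y) q \<longrightarrow> (\<exists>z\<in>saw_W W k. saw_le R t y z \<and> f z = q))"
    and root: "\<forall>q\<in>Q. RQ 0 q"
    and clp: "\<forall>q\<in>Q. \<forall>q'\<in>Q. q \<noteq> 0 \<longrightarrow> RQ q q' \<longrightarrow> cl q' = cl q"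
    and other: "\<forall>c. \<exists>q\<in>Q. q \<noteq> 0 \<and> cl q \<noteq> c"
    and H2: "\<forall>y\<in>saw_W W k. saw_le R t w0 y \<longrightarrow> f y = 0 \<longrightarrow>
        (\<exists>a b. \<forall>z\<in>saw_W W k. saw_le R t y z \<longrightarrow> z = y \<or> z = a \<or> z = b) \<longrightarrow>
        (\<forall>z\<in>saw_W W k. saw_le R t y z \<longrightarrow> z = y \<or> (\<forall>u\<in>saw_W W k. saw_le R t z u \<longrightarrow> u = z)) \<longrightarrow> False"
  shows False
proof -
  define S where "S = saw_W W k"
  define L where "L = saw_le R t"
  have SL: "\<And>x. Inl x \<in> S \<longleftrightarrow> x \<in> W" "\<And>i. Inr i \<in> S \<longleftrightarrow> i \<in> {1..<k}"
    unfolding S_def saw_W_def by auto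
  have reflW: "\<And>x. x \<in> W \<Longrightarrow> R x x" using po_refl[OF po] .
  have trW: "\<And>x y z. x \<in> W \<Longrightarrow> y \<in> W \<Longrightarrow> z \<in> W \<Longrightarrow> R x y \<Longrightarrow> R y z \<Longrightarrow> R x z"
    using po_trans[OF po] .
  have reflS: "\<And>x. x \<in> S \<Longrightarrow> L x x" using po_refl[OF poS] unfolding S_def L_def .
  have trS: "\<And>x y z. x \<in> S \<Longrightarrow> y \<in> S \<Longrightarrow> z \<in> S \<Longrightarrow> L x y \<Longrightarrow> L y z \<Longrightarrow> L x z"
    using po_trans[OF poS] unfolding S_def L_def .
  have tT: "\<And>j. j \<in> {1..k} \<Longrightarrow> t j \<in> Top_el W R" by (rule bij_betw_apply[OF enum])
  have tW: "\<And>j. j \<in> {1..k} \<Longrightarrow> t j \<in> W" using tT unfolding Top_el_def by blast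
  have tinj: "\<And>i j. i \<in> {1..k} \<Longrightarrow> j \<in> {1..k} \<Longrightarrow> t i = t j \<Longrightarrow> i = j"
    using enum unfolding bij_betw_def inj_on_def by blast
  have topmax: "\<And>j y. j \<in> {1..k} \<Longrightarrow> y \<in> W \<Longrightarrow> R (t j) y \<Longrightarrow> y = t j"
    using tT unfolding Top_el_def by blast
  have surjT: "\<And>m. m \<in> Top_el W R \<Longrightarrow> \<exists>j\<in>{1..k}. t j = m"
  proof -
    fix m assume "m \<in> Top_el W R"
    then have "m \<in> t ` {1..k}" using enum unfolding bij_betw_def by simp
    then show "\<exists>j\<in>{1..k}. t j = m" by (metis imageE)
  qed
  have upInr: "\<And>i z. L (Inr i) z \<Longrightarrow> z = Inr i"
  proof -
    fix i z assume "L (Inr i) z" then show "z = Inr i" unfolding L_def by (cases z) auto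
  qed
  have uptj: "\<And>j z. j \<in> {1..k} \<Longrightarrow> z \<in> S \<Longrightarrow> L (Inl (t j)) z \<Longrightarrow>
       z = Inl (t j) \<or> z = Inr (j - 1) \<or> z = Inr j"
  proof -
    fix j z assume j: "j \<in> {1..k}" and z: "z \<in> S" "L (Inl (t j)) z"
    show "z = Inl (t j) \<or> z = Inr (j - 1) \<or> z = Inr j"
    proof (cases z)
      case (Inl y)
      then have "y \<in> W" "R (t j) y" using z SL unfolding L_def by auto
      then show ?thesis using topmax[OF j] Inl by blast
    next
      case (Inr i)
      then have i: "i \<in> {1..<k}" and r: "R (t j) (t i) \<or> R (t j) (t (Suc i))" using z SL unfolding L_def by auto
      have i1: "i \<in> {1..k}" "Suc i \<in> {1..k}" using i by auto
      show ?thesis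
      proof (cases "R (t j) (t i)")
        case True
        then have "t i = t j" using topmax[OF j tW[OF i1(1)]] by simp
        then have "i = j" using tinj[OF i1(1) j] by simp
        then show ?thesis using Inr by simp
      next
        case False
        then have "R (t j) (t (Suc i))" using r by simp
        then have "t (Suc i) = t j" using topmax[OF j tW[OF i1(2)]] by simp
        then have "Suc i = j" using tinj[OF i1(2) j] by simp
        then show ?thesis using Inr by simp
      qed
    qed
  qed
  have w0S: "w0 \<in> S" using w0 unfolding S_def .
  have fr: "\<And>y. y \<in> S \<Longrightarrow> L w0 y \<Longrightarrow> f y \<in> Q" using frange unfolding S_def L_def by blast
  have fm: "\<And>y z. y \<in> S \<Longrightarrow> z \<in> S \<Longrightarrow> L w0 y \<Longrightarrow> L y z \<Longrightarrow> RQ (f y) (f z)"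
    using fmono unfolding S_def L_def by blast
  have fb: "\<And>y q. y \<in> S \<Longrightarrow> L w0 y \<Longrightarrow> q \<in> Q \<Longrightarrow> RQ (f y) q \<Longrightarrow> \<exists>z\<in>S. L y z \<and> f z = q"
    using fback unfolding S_def L_def by blast
  obtain x where wx: "w0 = Inl x" and xW: "x \<in> W"
  proof (cases w0)
    case (Inl x) then show ?thesis using that w0S SL by blast
  next
    case (Inr i)
    obtain q where q: "q \<in> Q" "q \<noteq> 0" using other by blast
    obtain z where "z \<in> S" "L w0 z" "f z = q" using fb[OF w0S reflS[OF w0S] q(1)] root q f0 by auto
    then show ?thesis using upInr Inr f0 q by metis
  qed
  define J where "J = {j\<in>{1..k}. R x (t j)}"
  have LJ: "\<And>j. j \<in> J \<Longrightarrow> L w0 (Inl (t j))" unfolding J_def L_def wx by simp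
  have SJ: "\<And>j. j \<in> J \<Longrightarrow> Inl (t j) \<in> S" unfolding J_def using SL tW by blast
  have step2: "\<And>j. j \<in> J \<Longrightarrow> f (Inl (t j)) \<noteq> 0"
  proof
    fix j assume j: "j \<in> J" and f: "f (Inl (t j)) = 0"
    have j1: "j \<in> {1..k}" using j unfolding J_def by blast
    have a: "\<exists>a b. \<forall>z\<in>S. L (Inl (t j)) z \<longrightarrow> z = Inl (t j) \<or> z = a \<or> z = b"
      using uptj[OF j1] by blast
    have b: "\<forall>z\<in>S. L (Inl (t j)) z \<longrightarrow> z = Inl (t j) \<or> (\<forall>u\<in>S. L z u \<longrightarrow> u = z)"
      using uptj[OF j1] upInr by blast
    show False using H2 SJ[OF j] LJ[OF j] f a b unfolding S_def L_def by blast
  qed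
  have step3: "\<And>j z. j \<in> J \<Longrightarrow> z \<in> S \<Longrightarrow> L (Inl (t j)) z \<Longrightarrow> cl (f z) = cl (f (Inl (t j)))"
  proof -
    fix j z assume j: "j \<in> J" and z: "z \<in> S" "L (Inl (t j)) z"
    have wz: "L w0 z" using trS[OF w0S SJ[OF j] z(1) LJ[OF j] z(2)] .
    have "RQ (f (Inl (t j))) (f z)" using fm[OF SJ[OF j] z(1) LJ[OF j] z(2)] .
    then show "cl (f z) = cl (f (Inl (t j)))"
      using clp fr[OF SJ[OF j] LJ[OF j]] fr[OF z(1) wz] step2[OF j] by blast
  qed
  have step4: "\<And>j. j \<in> J \<Longrightarrow> Suc j \<in> J \<Longrightarrow> cl (f (Inl (t j))) = cl (f (Inl (t (Suc j))))"
  proof -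
    fix j assume j: "j \<in> J" "Suc j \<in> J"
    have jr: "j \<in> {1..k}" "Suc j \<in> {1..k}" using j unfolding J_def by auto
    have iS: "Inr j \<in> S" using SL jr by auto
    have "L (Inl (t j)) (Inr j)" unfolding L_def using reflW[OF tW[OF jr(1)]] by simp
    moreover have "L (Inl (t (Suc j))) (Inr j)" unfolding L_def using reflW[OF tW[OF jr(2)]] by simp
    ultimately show "cl (f (Inl (t j))) = cl (f (Inl (t (Suc j))))"
      using step3[OF j(1) iS] step3[OF j(2) iS] by simp
  qed
  have interval: "\<And>j1 j2 j. j1 \<in> J \<Longrightarrow> j2 \<in> J \<Longrightarrow> j1 \<le> j \<Longrightarrow> j \<le> j2 \<Longrightarrow> j \<in> J"
  proof -
    fix j1 j2 j assume h: "j1 \<in> J" "j2 \<in> J" "j1 \<le> j" "j \<le> j2"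
    show "j \<in> J"
    proof (cases "j = j1 \<or> j = j2")
      case True then show ?thesis using h by blast
    next
      case False
      then have lt: "j1 < j" "j < j2" using h by auto
      have r: "j1 \<in> {1..k}" "j2 \<in> {1..k}" "R x (t j1)" "R x (t j2)" using h unfolding J_def by auto
      have jr: "j \<in> {1..k}" using r lt by auto
      have "prec (t j1) (t j)" "prec (t j) (t j2)" using enum_mono lt r jr by auto
      then have "R x (t j)" using plane unfolding plane_order_def
        using xW tT[OF r(1)] tT[OF r(2)] tT[OF jr] r(3,4) by blast
      then show ?thesis unfolding J_def using jr by blast
    qed
  qed
  obtain m where m: "m \<in> Top_el W R" "R x m" using ex_top[OF fin po xW] by blast
  then obtain jm where "jm \<in> {1..k}" "t jm = m" using surjT by blast
  then have Jne: "J \<noteq> {}" unfolding J_def using m by blast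
  have finJ: "finite J" unfolding J_def by simp
  define j0 where "j0 = Min J"
  have j0J: "j0 \<in> J" unfolding j0_def using Min_in[OF finJ Jne] .
  have j0min: "\<And>j. j \<in> J \<Longrightarrow> j0 \<le> j" unfolding j0_def using Min_le[OF finJ] by blast
  define C where "C = cl (f (Inl (t j0)))"
  have indd: "\<And>d. j0 + d \<in> J \<Longrightarrow> cl (f (Inl (t (j0 + d)))) = C"
  proof -
    fix d show "j0 + d \<in> J \<Longrightarrow> cl (f (Inl (t (j0 + d)))) = C"
    proof (induction d)
      case 0 then show ?case unfolding C_def by simp
    next
      case (Suc d)
      have dJ: "j0 + d \<in> J" using interval[OF j0J Suc.prems] by simp
      have "cl (f (Inl (t (j0 + d)))) = cl (f (Inl (t (Suc (j0 + d)))))"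
        using step4[OF dJ] Suc.prems by simp
      then show ?case using Suc.IH[OF dJ] by simp
    qed
  qed
  have allJ: "\<And>j. j \<in> J \<Longrightarrow> cl (f (Inl (t j))) = C"
  proof -
    fix j assume j: "j \<in> J"
    have "j = j0 + (j - j0)" using j0min[OF j] by simp
    then show "cl (f (Inl (t j))) = C" using indd[of "j - j0"] j by simp
  qed
  have step7: "\<And>y. y \<in> S \<Longrightarrow> L w0 y \<Longrightarrow> f y = 0 \<or> cl (f y) = C"
  proof -
    fix y assume y: "y \<in> S" "L w0 y"
    show "f y = 0 \<or> cl (f y) = C"
    proof (cases y)
      case (Inl y')
      have y'W: "y' \<in> W" and xy: "R x y'" using y Inl SL wx unfolding L_def by auto
      obtain m where m: "m \<in> Top_el W R" "R y' m" using ex_top[OF fin po y'W] by blast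
      then obtain j where j: "j \<in> {1..k}" "t j = m" using surjT by blast
      have "R x (t j)" using trW[OF xW y'W tW[OF j(1)] xy] m j by simp
      then have jJ: "j \<in> J" unfolding J_def using j by blast
      have "L y (Inl (t j))" using Inl m j unfolding L_def by simp
      then have "RQ (f y) (f (Inl (t j)))" using fm[OF y(1) SJ[OF jJ] y(2)] by blast
      then have h: "f y \<noteq> 0 \<longrightarrow> cl (f (Inl (t j))) = cl (f y)"
        using clp fr[OF y] fr[OF SJ[OF jJ] LJ[OF jJ]] by blast
      show ?thesis using allJ[OF jJ] h by metis
    next
      case (Inr i)
      have i: "i \<in> {1..<k}" and r: "R x (t i) \<or> R x (t (Suc i))" using y Inr SL wx unfolding L_def by auto
      show ?thesis
      proof (cases "R x (t i)")
        case True
        then have iJ: "i \<in> J" unfolding J_def using i by auto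
        have "L (Inl (t i)) y" unfolding L_def Inr using reflW[OF tW] i by auto
        then show ?thesis using step3[OF iJ y(1)] allJ[OF iJ] by simp
      next
        case False
        then have iJ: "Suc i \<in> J" unfolding J_def using i r by auto
        have "L (Inl (t (Suc i))) y" unfolding L_def Inr using reflW[OF tW] i by auto
        then show ?thesis using step3[OF iJ y(1)] allJ[OF iJ] by simp
      qed
    qed
  qed
  obtain q where q: "q \<in> Q" "q \<noteq> 0" "cl q \<noteq> C" using other by blast
  obtain z where z: "z \<in> S" "L w0 z" "f z = q" using fb[OF w0S reflS[OF w0S] q(1)] root q f0 by auto
  show False using step7[OF z(1,2)] z q by simp
qed

lemma saw_porder:
  assumes po: "porder W R" and tW: "\<forall>i\<in>{1..<k}. t i \<in> W \<and> t (Suc i) \<in> W"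
  shows "porder (saw_W W k) (saw_le R t)"
  unfolding porder_def
proof (intro conjI ballI impI)
  fix x assume "x \<in> saw_W W k"
  then show "saw_le R t x x" unfolding saw_W_def by (cases x) (auto intro: po_refl[OF po])
next
  fix x y assume xy: "x \<in> saw_W W k" "y \<in> saw_W W k" "saw_le R t x y \<and> saw_le R t y x"
  show "x = y"
  proof (cases x)
    case (Inl a)
    have aW: "a \<in> W" using xy(1) Inl unfolding saw_W_def by auto
    show ?thesis
    proof (cases y)
      case (Inl b)
      have bW: "b \<in> W" using xy(2) Inl unfolding saw_W_def by auto
      have "R a b" "R b a" using xy(3) \<open>x = Inl a\<close> Inl by auto
      then show ?thesis using po_anti[OF po aW bW] \<open>x = Inl a\<close> Inl by simp
    next
      case (Inr j) then show ?thesis using xy(3) \<open>x = Inl a\<close> by simp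
    qed
  next
    case (Inr i)
    have l: "saw_le R t x y" using xy(3) by (rule conjunct1)
    show ?thesis
    proof (cases y)
      case (Inl b)
      have "saw_le R t (Inr i) (Inl b)" using l Inl \<open>x = Inr i\<close> by simp
      then show ?thesis by simp
    next
      case (Inr j)
      have "saw_le R t (Inr i) (Inr j)" using l Inr \<open>x = Inr i\<close> by simp
      then show ?thesis using Inr \<open>x = Inr i\<close> by simp
    qed
  qed
next
  fix x y z assume xyz: "x \<in> saw_W W k" "y \<in> saw_W W k" "z \<in> saw_W W k"
    "saw_le R t x y \<and> saw_le R t y z"
  show "saw_le R t x z"
  proof (cases x)
    case (Inl a)
    have aW: "a \<in> W" using xyz(1) Inl unfolding saw_W_def by auto
    show ?thesis
    proof (cases y)
      case (Inl b)
      have bW: "b \<in> W" using xyz(2) Inl unfolding saw_W_def by auto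
      show ?thesis
      proof (cases z)
        case (Inl c)
        have cW: "c \<in> W" using xyz(3) Inl unfolding saw_W_def by auto
        show ?thesis using xyz(4) \<open>x = Inl a\<close> \<open>y = Inl b\<close> Inl po_trans[OF po aW bW cW] by simp
      next
        case (Inr i)
        have i: "i \<in> {1..<k}" using xyz(3) Inr unfolding saw_W_def by auto
        have r: "R a b" "R b (t i) \<or> R b (t (Suc i))" using xyz(4) \<open>x = Inl a\<close> \<open>y = Inl b\<close> Inr by auto
        have "R a (t i) \<or> R a (t (Suc i))"
          using r po_trans[OF po aW bW, of "t i"] po_trans[OF po aW bW, of "t (Suc i)"] tW i by blast
        then show ?thesis using \<open>x = Inl a\<close> Inr by simp
      qed
    next
      case (Inr i)
      then show ?thesis using xyz(4) \<open>x = Inl a\<close> by (cases z) simp_all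
    qed
  next
    case (Inr i)
    then show ?thesis using xyz(4) by (cases y; cases z) simp_all
  qed
qed

lemma forces_iso:
  assumes bij: "bij_betw h W' X" and i: "i \<in> W'"
  shows "forces W' (\<lambda>i j. L (h i) (h j)) (\<lambda>p. {i\<in>W'. h i \<in> V p}) i \<phi> = forces X L V (h i) \<phi>"
  using i
proof (induction \<phi> arbitrary: i)
  case (Var p) then show ?case by simp
next
  case Bot then show ?case by simp
next
  case (Conj a b) then show ?case by simp
next
  case (Disj a b) then show ?case by simp
next
  case (Imp a b)
  have hX: "\<And>j. j \<in> W' \<Longrightarrow> h j \<in> X" using bij bij_betw_apply by metis
  have sX: "\<And>v. v \<in> X \<Longrightarrow> \<exists>j\<in>W'. h j = v" using bij unfolding bij_betw_def by (metis imageE)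
  show ?case
  proof
    assume L: "forces W' (\<lambda>i j. L (h i) (h j)) (\<lambda>p. {i\<in>W'. h i \<in> V p}) i (Imp a b)"
    show "forces X L V (h i) (Imp a b)"
      unfolding forces.simps
    proof (intro ballI impI)
      fix v assume v: "v \<in> X" "L (h i) v" "forces X L V v a"
      obtain j where j: "j \<in> W'" "h j = v" using sX[OF v(1)] by blast
      have "forces W' (\<lambda>i j. L (h i) (h j)) (\<lambda>p. {i\<in>W'. h i \<in> V p}) j a"
        using Imp.IH(1)[OF j(1)] v j by simp
      then have "forces W' (\<lambda>i j. L (h i) (h j)) (\<lambda>p. {i\<in>W'. h i \<in> V p}) j b"
        using L j v by simp
      then show "forces X L V v b" using Imp.IH(2)[OF j(1)] j by simp
    qed
  next
    assume L: "forces X L V (h i) (Imp a b)"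
    show "forces W' (\<lambda>i j. L (h i) (h j)) (\<lambda>p. {i\<in>W'. h i \<in> V p}) i (Imp a b)"
      unfolding forces.simps
    proof (intro ballI impI)
      fix j assume j: "j \<in> W'" "L (h i) (h j)"
        "forces W' (\<lambda>i j. L (h i) (h j)) (\<lambda>p. {i\<in>W'. h i \<in> V p}) j a"
      have "forces X L V (h j) a" using Imp.IH(1)[OF j(1)] j(3) by simp
      then have "forces X L V (h j) b" using L j hX[OF j(1)] by simp
      then show "forces W' (\<lambda>i j. L (h i) (h j)) (\<lambda>p. {i\<in>W'. h i \<in> V p}) j b"
        using Imp.IH(2)[OF j(1)] by simp
    qed
  qed
qed

lemma BD_valid:
  fixes X :: "'x set" and L
  assumes fin: "finite X" and po: "porder X L" and hl: "height_le X L n" and phi: "\<phi> \<in> BD n"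
  shows "valid X L \<phi>"
proof -
  obtain h where bij: "bij_betw h {0..<card X} X" using ex_bij_betw_nat_finite[OF fin] by blast
  define W' where "W' = {0..<card X}"
  define R' where "R' = (\<lambda>i j. L (h i) (h j))"
  have hX: "\<And>j. j \<in> W' \<Longrightarrow> h j \<in> X" unfolding W'_def using bij bij_betw_apply by metis
  have hinj: "inj_on h W'" using bij unfolding bij_betw_def W'_def by blast
  have sX: "\<And>v. v \<in> X \<Longrightarrow> \<exists>j\<in>W'. h j = v" using bij unfolding bij_betw_def W'_def by (metis imageE)
  have finW: "finite W'" unfolding W'_def by simp
  have poW: "porder W' R'" unfolding porder_def R'_def
  proof (intro conjI ballI impI)
    fix x assume "x \<in> W'" then show "L (h x) (h x)" using po_refl[OF po hX] by blast
  next
    fix x y assume "x \<in> W'" "y \<in> W'" "L (h x) (h y) \<and> L (h y) (h x)"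
    then show "x = y" using po_anti[OF po hX hX] hinj unfolding inj_on_def by blast
  next
    fix x y z assume "x \<in> W'" "y \<in> W'" "z \<in> W'" "L (h x) (h y) \<and> L (h y) (h z)"
    then show "L (h x) (h z)" using po_trans[OF po hX hX hX] by blast
  qed
  have hlW: "height_le W' R' n" unfolding height_le_def
  proof (intro allI impI)
    fix C assume C: "chain_in W' R' C"
    have CW: "C \<subseteq> W'" using C unfolding chain_in_def by blast
    have finC: "finite C" using finW CW finite_subset by blast
    have "chain_in X L (h ` C)" using C hX unfolding chain_in_def R'_def by blast
    then have "card (h ` C) \<le> Suc n" using hl unfolding height_le_def by blast
    moreover have "card (h ` C) = card C" using card_image inj_on_subset[OF hinj CW] by blast
    ultimately show "finite C \<and> card C \<le> Suc n" using finC by simp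
  qed
  have vW: "valid W' R' \<phi>" using phi finW poW hlW unfolding BD_def W'_def by blast
  show ?thesis unfolding valid_def
  proof (intro allI impI ballI)
    fix V :: "nat \<Rightarrow> 'x set" and w assume up: "\<forall>p. is_upset X L (V p)" and w: "w \<in> X"
    have up': "\<forall>p. is_upset W' R' {i\<in>W'. h i \<in> V p}"
      using up hX unfolding is_upset_def R'_def by blast
    obtain i where i: "i \<in> W'" "h i = w" using sX[OF w] by blast
    have "(\<forall>p. is_upset W' R' {i\<in>W'. h i \<in> V p}) \<longrightarrow> (\<forall>w\<in>W'. forces W' R' (\<lambda>p. {i\<in>W'. h i \<in> V p}) w \<phi>)"
      using vW unfolding valid_def by (rule spec)
    then have "forces W' R' (\<lambda>p. {i\<in>W'. h i \<in> V p}) i \<phi>" using up' i by blast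
    then show "forces X L V w \<phi>" using forces_iso[where L=L and V=V and \<phi>=\<phi>, OF bij[folded W'_def] i(1)] i unfolding R'_def by simp
  qed
qed

lemma fork_facts: "finite fork3_W" "porder fork3_W fork3_le" "(0::nat) \<in> fork3_W" "\<forall>x\<in>fork3_W. fork3_le 0 x"
  by (auto simp: fork3_W_def fork3_le_def porder_def)

lemma scott_facts: "finite scott_W" "porder scott_W scott_le" "(0::nat) \<in> scott_W" "\<forall>x\<in>scott_W. scott_le 0 x"
  by (auto simp: scott_W_def scott_le_def porder_def)

lemma fork_H2:
  assumes fback: "\<forall>y\<in>S. L w0 y \<longrightarrow> (\<forall>q\<in>fork3_W. fork3_le (f y) q \<longrightarrow> (\<exists>z\<in>S. L y z \<and> f z = q))"
  shows "\<forall>y\<in>S. L w0 y \<longrightarrow> f y = (0::nat) \<longrightarrow>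
        (\<exists>a b. \<forall>z\<in>S. L y z \<longrightarrow> z = y \<or> z = a \<or> z = b) \<longrightarrow>
        (\<forall>z\<in>S. L y z \<longrightarrow> z = y \<or> (\<forall>u\<in>S. L z u \<longrightarrow> u = z)) \<longrightarrow> False"
proof (intro ballI impI)
  fix y assume y: "y \<in> S" "L w0 y" "f y = 0" and ab: "\<exists>a b. \<forall>z\<in>S. L y z \<longrightarrow> z = y \<or> z = a \<or> z = b"
    and "\<forall>z\<in>S. L y z \<longrightarrow> z = y \<or> (\<forall>u\<in>S. L z u \<longrightarrow> u = z)"
  obtain a b where ab: "\<forall>z\<in>S. L y z \<longrightarrow> z = y \<or> z = a \<or> z = b" using ab by blast
  have q: "(1::nat) \<in> fork3_W" "(2::nat) \<in> fork3_W" "(3::nat) \<in> fork3_W"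
    "fork3_le (f y) 1" "fork3_le (f y) 2" "fork3_le (f y) 3" using y(3) by (auto simp: fork3_W_def fork3_le_def)
  obtain z1 where z1: "z1 \<in> S" "L y z1" "f z1 = 1" using fback y q(1,4) by blast
  obtain z2 where z2: "z2 \<in> S" "L y z2" "f z2 = 2" using fback y q(2,5) by blast
  obtain z3 where z3: "z3 \<in> S" "L y z3" "f z3 = 3" using fback y q(3,6) by blast
  have "z1 = a \<or> z1 = b" using ab z1 y(3) by force
  moreover have "z2 = a \<or> z2 = b" using ab z2 y(3) by force
  moreover have "z3 = a \<or> z3 = b" using ab z3 y(3) by force
  ultimately show False using z1(3) z2(3) z3(3) by auto
qed

lemma scott_H2:
  assumes fback: "\<forall>y\<in>S. L w0 y \<longrightarrow> (\<forall>q\<in>scott_W. scott_le (f y) q \<longrightarrow> (\<exists>z\<in>S. L y z \<and> f z = q))"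
    and trS: "\<And>x y z. x \<in> S \<Longrightarrow> y \<in> S \<Longrightarrow> z \<in> S \<Longrightarrow> L x y \<Longrightarrow> L y z \<Longrightarrow> L x z"
    and w0: "w0 \<in> S"
  shows "\<forall>y\<in>S. L w0 y \<longrightarrow> f y = (0::nat) \<longrightarrow>
        (\<exists>a b. \<forall>z\<in>S. L y z \<longrightarrow> z = y \<or> z = a \<or> z = b) \<longrightarrow>
        (\<forall>z\<in>S. L y z \<longrightarrow> z = y \<or> (\<forall>u\<in>S. L z u \<longrightarrow> u = z)) \<longrightarrow> False"
proof (intro ballI impI)
  fix y assume y: "y \<in> S" "L w0 y" "f y = 0" and "\<exists>a b. \<forall>z\<in>S. L y z \<longrightarrow> z = y \<or> z = a \<or> z = b" and mx: "\<forall>z\<in>S. L y z \<longrightarrow> z = y \<or> (\<forall>u\<in>S. L z u \<longrightarrow> u = z)"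
  have q: "(1::nat) \<in> scott_W" "scott_le (f y) 1" "(2::nat) \<in> scott_W" "scott_le 1 2"
    using y(3) by (auto simp: scott_W_def scott_le_def)
  obtain z where z: "z \<in> S" "L y z" "f z = 1" using fback y q(1,2) by blast
  have zy: "z \<noteq> y" using z y by auto
  then have zm: "\<forall>u\<in>S. L z u \<longrightarrow> u = z" using mx z by blast
  have wz: "L w0 z" using trS[OF w0 y(1) z(1) y(2) z(2)] .
  obtain u where u: "u \<in> S" "L z u" "f u = 2" using fback z(1) wz q(3,4) z(3) by metis
  show False using zm u z by auto
qed

lemma tops_in_W:
  assumes enum: "bij_betw t {1..k} (Top_el W R)"
  shows "\<forall>i\<in>{1..<k}. t i \<in> W \<and> t (Suc i) \<in> W"
proof
  fix i assume i: "i \<in> {1..<k}"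
  have "i \<in> {1..k}" "Suc i \<in> {1..k}" using i by auto
  then have "t i \<in> Top_el W R" "t (Suc i) \<in> Top_el W R" using bij_betw_apply[OF enum] by blast+
  then show "t i \<in> W \<and> t (Suc i) \<in> W" unfolding Top_el_def by blast
qed

lemma saw_fork_valid:
  fixes W :: "'a set"
  assumes fin: "finite W" and po: "porder W R" and plane: "plane_order W R prec"
    and enum: "bij_betw t {1..k} (Top_el W R)"
    and enum_mono: "\<forall>i j. 1 \<le> i \<and> i < j \<and> j \<le> k \<longrightarrow> prec (t i) (t j)"
  shows "valid (saw_W W k) (saw_le R t) chi_fork"
proof -
  have poS: "porder (saw_W W k) (saw_le R t)" using saw_porder[OF po tops_in_W[OF enum]] .
  show ?thesis unfolding valid_def chi_fork_def
  proof (intro allI impI ballI)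
    fix V :: "nat set \<Rightarrow> ('a + nat) set" and w
    assume up: "\<forall>p. is_upset (saw_W W k) (saw_le R t) (V p)" and w: "w \<in> saw_W W k"
    show "forces (saw_W W k) (saw_le R t) V w (jankov fork3_W fork3_le 0)"
    proof (rule ccontr)
      assume nf: "\<not> forces (saw_W W k) (saw_le R t) V w (jankov fork3_W fork3_le 0)"
      from jankov_pmorph[OF poS fork_facts(1,2,3,4) up w nf]
      obtain w0 f where w0: "w0 \<in> saw_W W k" and f0: "f w0 = 0"
        and frange: "\<forall>y\<in>saw_W W k. saw_le R t w0 y \<longrightarrow> f y \<in> fork3_W"
        and fmono: "\<forall>y\<in>saw_W W k. \<forall>z\<in>saw_W W k. saw_le R t w0 y \<longrightarrow> saw_le R t y z \<longrightarrow> fork3_le (f y) (f z)"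
        and fback: "\<forall>y\<in>saw_W W k. saw_le R t w0 y \<longrightarrow> (\<forall>q\<in>fork3_W. fork3_le (f y) q \<longrightarrow> (\<exists>z\<in>saw_W W k. saw_le R t y z \<and> f z = q))"
        by blast
      have clp: "\<forall>q\<in>fork3_W. \<forall>q'\<in>fork3_W. q \<noteq> 0 \<longrightarrow> fork3_le q q' \<longrightarrow> (\<lambda>q. q) q' = (\<lambda>q. q) q"
        by (auto simp: fork3_le_def)
      have other: "\<forall>c. \<exists>q\<in>fork3_W. q \<noteq> 0 \<and> (\<lambda>q. q) q \<noteq> c"
      proof
        fix c :: nat
        show "\<exists>q\<in>fork3_W. q \<noteq> 0 \<and> (\<lambda>q. q) q \<noteq> c"
        proof (cases "c = 1")
          case True then show ?thesis by (rule_tac x=2 in bexI) (auto simp: fork3_W_def)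
        next
          case False then show ?thesis by (rule_tac x=1 in bexI) (auto simp: fork3_W_def)
        qed
      qed
      have H2: "\<forall>y\<in>saw_W W k. saw_le R t w0 y \<longrightarrow> f y = 0 \<longrightarrow>
        (\<exists>a b. \<forall>z\<in>saw_W W k. saw_le R t y z \<longrightarrow> z = y \<or> z = a \<or> z = b) \<longrightarrow>
        (\<forall>z\<in>saw_W W k. saw_le R t y z \<longrightarrow> z = y \<or> (\<forall>u\<in>saw_W W k. saw_le R t z u \<longrightarrow> u = z)) \<longrightarrow> False"
        by (rule fork_H2[OF fback])
      show False
        using saw_main[OF fin po plane enum enum_mono poS w0 f0 frange fmono fback fork_facts(4) clp other H2] .
    qed
  qed
qed

lemma saw_scott_valid:
  fixes W :: "'a set"
  assumes fin: "finite W" and po: "porder W R" and plane: "plane_order W R prec"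
    and enum: "bij_betw t {1..k} (Top_el W R)"
    and enum_mono: "\<forall>i j. 1 \<le> i \<and> i < j \<and> j \<le> k \<longrightarrow> prec (t i) (t j)"
  shows "valid (saw_W W k) (saw_le R t) chi_scott"
proof -
  have poS: "porder (saw_W W k) (saw_le R t)" using saw_porder[OF po tops_in_W[OF enum]] .
  show ?thesis unfolding valid_def chi_scott_def
  proof (intro allI impI ballI)
    fix V :: "nat set \<Rightarrow> ('a + nat) set" and w
    assume up: "\<forall>p. is_upset (saw_W W k) (saw_le R t) (V p)" and w: "w \<in> saw_W W k"
    show "forces (saw_W W k) (saw_le R t) V w (jankov scott_W scott_le 0)"
    proof (rule ccontr)
      assume nf: "\<not> forces (saw_W W k) (saw_le R t) V w (jankov scott_W scott_le 0)"
      from jankov_pmorph[OF poS scott_facts(1,2,3,4) up w nf]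
      obtain w0 f where w0: "w0 \<in> saw_W W k" and f0: "f w0 = 0"
        and frange: "\<forall>y\<in>saw_W W k. saw_le R t w0 y \<longrightarrow> f y \<in> scott_W"
        and fmono: "\<forall>y\<in>saw_W W k. \<forall>z\<in>saw_W W k. saw_le R t w0 y \<longrightarrow> saw_le R t y z \<longrightarrow> scott_le (f y) (f z)"
        and fback: "\<forall>y\<in>saw_W W k. saw_le R t w0 y \<longrightarrow> (\<forall>q\<in>scott_W. scott_le (f y) q \<longrightarrow> (\<exists>z\<in>saw_W W k. saw_le R t y z \<and> f z = q))"
        by blast
      define cl :: "nat \<Rightarrow> nat" where "cl = (\<lambda>q. if q = 3 then 3 else 2)"
      have clp: "\<forall>q\<in>scott_W. \<forall>q'\<in>scott_W. q \<noteq> 0 \<longrightarrow> scott_le q q' \<longrightarrow> cl q' = cl q"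
        by (auto simp: scott_le_def cl_def)
      have other: "\<forall>c. \<exists>q\<in>scott_W. q \<noteq> 0 \<and> cl q \<noteq> c"
      proof
        fix c :: nat
        show "\<exists>q\<in>scott_W. q \<noteq> 0 \<and> cl q \<noteq> c"
        proof (cases "c = 3")
          case True then show ?thesis by (rule_tac x=1 in bexI) (auto simp: scott_W_def cl_def)
        next
          case False then show ?thesis by (rule_tac x=3 in bexI) (auto simp: scott_W_def cl_def)
        qed
      qed
      have trS: "\<And>x y z. x \<in> saw_W W k \<Longrightarrow> y \<in> saw_W W k \<Longrightarrow> z \<in> saw_W W k \<Longrightarrow>
          saw_le R t x y \<Longrightarrow> saw_le R t y z \<Longrightarrow> saw_le R t x z"
        using po_trans[OF poS] .
      have H2: "\<forall>y\<in>saw_W W k. saw_le R t w0 y \<longrightarrow> f y = 0 \<longrightarrow>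
        (\<exists>a b. \<forall>z\<in>saw_W W k. saw_le R t y z \<longrightarrow> z = y \<or> z = a \<or> z = b) \<longrightarrow>
        (\<forall>z\<in>saw_W W k. saw_le R t y z \<longrightarrow> z = y \<or> (\<forall>u\<in>saw_W W k. saw_le R t z u \<longrightarrow> u = z)) \<longrightarrow> False"
        by (rule scott_H2[OF fback trS w0])
      show False
        using saw_main[OF fin po plane enum enum_mono poS w0 f0 frange fmono fback scott_facts(4) clp other H2] .
    qed
  qed
qed

theorem lemma7p7:
  fixes W :: "'a set" and R :: "'a \<Rightarrow> 'a \<Rightarrow> bool" and prec :: "'a \<Rightarrow> 'a \<Rightarrow> bool"
    and t :: "nat \<Rightarrow> 'a" and k n :: nat
  assumes tree: "is_tree W R"
    and pos_height: "\<not> height_le W R 0"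
    and same_height: "\<forall>x\<in>Top_el W R. \<forall>y\<in>Top_el W R. card (down W R x) = card (down W R y)"
    and plane: "plane_order W R prec"
    and k_def: "k = card (Top_el W R)"
    and enum: "bij_betw t {1..k} (Top_el W R)"
    and enum_mono: "\<forall>i j. 1 \<le> i \<and> i < j \<and> j \<le> k \<longrightarrow> prec (t i) (t j)"
    and height: "has_height (saw_W W k) (saw_le R t) n"
  shows "\<forall>\<phi>\<in>PL n. valid (saw_W W k) (saw_le R t) \<phi>"
proof
  have fin: "finite W" and po: "porder W R" using tree unfolding is_tree_def by auto
  have poS: "porder (saw_W W k) (saw_le R t)" using saw_porder[OF po tops_in_W[OF enum]] .
  have finS: "finite (saw_W W k)" unfolding saw_W_def using fin by simp
  have hS: "height_le (saw_W W k) (saw_le R t) n" using height unfolding has_height_def by blast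
  have vf: "valid (saw_W W k) (saw_le R t) chi_fork" using saw_fork_valid[OF fin po plane enum enum_mono] .
  have vs: "valid (saw_W W k) (saw_le R t) chi_scott" using saw_scott_valid[OF fin po plane enum enum_mono] .
  fix \<phi> assume "\<phi> \<in> PL n"
  then show "valid (saw_W W k) (saw_le R t) \<phi>"
  proof (induction rule: PL.induct)
    case (bd \<phi>) then show ?case using BD_valid[OF finS poS hS] by blast
  next
    case (fork \<sigma>) show ?case using valid_subst[OF poS vf] .
  next
    case (scott \<sigma>) show ?case using valid_subst[OF poS vs] .
  next
    case (mp \<phi> \<psi>) then show ?case using valid_mp[OF poS] by blast
  next
    case (sub \<phi> \<tau>) then show ?case using valid_subst[OF poS] by blast
  qed
qed

end
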